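(* Let $\bm{G}_t\in\mathbb{R}^{n_1\times n_2}$, $\epsilon_t>0$, $\bm{L}_t=\epsilon_t\bm{I}_{n_1}+\mathrm{diag}(\bm{G}_t\bm{G}_t^T)$, $\bm{R}_t=\epsilon_t\bm{I}_{n_2}+\mathrm{diag}(\bm{G}_t^T\bm{G}_t)$, $\nu_t=\epsilon_t^{1/2}$, $\mu_t=(\epsilon_t+\|\bm{G}_t\|_\vee^2)^{1/2}$. Let $\bm{X}_t,\bm{X}\in\mathbb{R}^{n_1\times n_2}$ be rank-$r$ matrices, $\bm{X}_t=\bm{U}_t\bm{\Sigma}_t\bm{V}_t^T$ a compact SVD, and $\widetilde{\mathcal{P}}_{\mathbb{T}_t}$ the orthogonal projector, with respect to $\langle\cdot,\cdot\rangle_{\mathcal{W}_t}$, onto $\mathbb{T}_t=\{\bm{U}_t\bm{Q}^T+\bm{P}\bm{V}_t^T:\bm{P}\in\mathbb{R}^{n_1\times r},\bm{Q}\in\mathbb{R}^{n_2\times r}\}$. Assume $\mathcal{A}:\mathbb{R}^{n_1\times n_2}\to\mathbb{R}^m$ satisfies the restricted isometry property of order $3r$ with constant $\delta_{3r}$. Then $$\big\|\widetilde{\mathcal{P}}_{\mathbb{T}_t}\mathcal{W}_t^{-1}\mathcal{A}^*\mathcal{A}(\mathcal{I}-\widetilde{\mathcal{P}}_{\mathbb{T}_t})\bm{X}\big\|_{\mathcal{W}_t}\le\frac12\Big((\nu_t^{-1}-\mu_t^{-1})+(\nu_t^{-1}+\mu_t^{-1})\delta_{3r}\Big)\big\|(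\mathcal{I}-\widetilde{\mathcal{P}}_{\mathbb{T}_t})\bm{X}\big\|_{\mathcal{W}_t}.$$
   Context: Restricted isometry property of order $s$: there is $\delta_s\in(0,1)$ with $(1-\delta_s)\|\bm{Z}\|_F^2\le\|\mathcal{A}\bm{Z}\|_2^2\le(1+\delta_s)\|\bm{Z}\|_F^2$ for all $\bm{Z}$ of rank at most $s$. $\mathcal{A}\bm{Y}=(\langle\bm{A}_i,\bm{Y}\rangle)_{i=1}^m$, $\mathcal{A}^*\bm{p}=\sum_ip_i\bm{A}_i$ is its adjoint under the standard inner product $\langle\bm{A},\bm{B}\rangle=\mathrm{trace}(\bm{A}^T\bm{B})$. $\langle\bm{Z},\bm{Y}\rangle_{\mathcal{W}_t}=\langle\bm{L}_t^{1/4}\bm{Z}\bm{R}_t^{1/4},\bm{Y}\rangle$, $\|\cdot\|_{\mathcal{W}_t}$ its norm, and $\mathcal{W}_t^{-1}\bm{Z}=\bm{L}_t^{-1/4}\bm{Z}\bm{R}_t^{-1/4}$. $\mathcal{I}$ is the identity. $\|\bm{Z}\|_\vee=\max\{\max_i\|\bm{Z}(i,:)\|_2,\max_j\|\bm{Z}(:,j)\|_2\}$. *)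

theory Defs
  imports "HOL-Analysis.Analysis"
begin

text \<open>Matrices in R^(n1 x n2) are rendered as real^'n2^'n1 (rows indexed by 'n1).
  The inner product of this type is the Frobenius inner product trace(A^T B),
  and norm is the Frobenius norm.\<close>

definition outer :: "real^'n1 \<Rightarrow> real^'n2 \<Rightarrow> real^'n2^'n1" where
  "outer u v = (\<chi> i j. u$i * v$j)"

definition diag_of_vec :: "real^'n \<Rightarrow> real^'n^'n" where
  "diag_of_vec d = (\<chi> i j. if i = j then d$i else 0)"

definition diag_powr :: "real^'n^'n \<Rightarrow> real \<Rightarrow> real^'n^'n" where
  "diag_powr D p = (\<chi> i j. if i = j then (D$i$i) powr p else 0)"

definition Lmat :: "real \<Rightarrow> real^'n2^'n1 \<Rightarrow> real^'n1^'n1" where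
  "Lmat eps G = eps *\<^sub>R mat 1 + diag_of_vec (\<chi> i. (G ** transpose G)$i$i)"

definition Rmat :: "real \<Rightarrow> real^'n2^'n1 \<Rightarrow> real^'n2^'n2" where
  "Rmat eps G = eps *\<^sub>R mat 1 + diag_of_vec (\<chi> j. (transpose G ** G)$j$j)"

definition winner :: "real \<Rightarrow> real^'n2^'n1 \<Rightarrow> real^'n2^'n1 \<Rightarrow> real^'n2^'n1 \<Rightarrow> real" where
  "winner eps G Z Y =
     inner (diag_powr (Lmat eps G) (1/4) ** Z ** diag_powr (Rmat eps G) (1/4)) Y"

definition wnorm :: "real \<Rightarrow> real^'n2^'n1 \<Rightarrow> real^'n2^'n1 \<Rightarrow> real" where
  "wnorm eps G Z = sqrt (winner eps G Z Z)"

definition Winv :: "real \<Rightarrow> real^'n2^'n1 \<Rightarrow> real^'n2^'n1 \<Rightarrow> real^'n2^'n1" where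
  "Winv eps G Z = diag_powr (Lmat eps G) (-1/4) ** Z ** diag_powr (Rmat eps G) (-1/4)"

definition wproj :: "real \<Rightarrow> real^'n2^'n1 \<Rightarrow> (real^'n2^'n1) set \<Rightarrow> real^'n2^'n1 \<Rightarrow> real^'n2^'n1" where
  "wproj eps G T Z = (THE Y. Y \<in> T \<and> (\<forall>Y'\<in>T. winner eps G (Z - Y) Y' = 0))"

definition vee_norm :: "real^'n2^'n1 \<Rightarrow> real" where
  "vee_norm G = max (Max (range (\<lambda>i. norm (row i G)))) (Max (range (\<lambda>j. norm (column j G))))"

definition tangent_space :: "nat \<Rightarrow> (nat \<Rightarrow> real^'n1) \<Rightarrow> (nat \<Rightarrow> real^'n2) \<Rightarrow> (real^'n2^'n1) set" where
  "tangent_space r U V =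
     {(\<Sum>k<r. outer (U k) (Q k)) + (\<Sum>k<r. outer (P k) (V k)) | P Q. True}"

definition compact_svd :: "real^'n2^'n1 \<Rightarrow> nat \<Rightarrow> (nat \<Rightarrow> real^'n1) \<Rightarrow> (nat \<Rightarrow> real) \<Rightarrow> (nat \<Rightarrow> real^'n2) \<Rightarrow> bool" where
  "compact_svd X r U s V \<longleftrightarrow>
     (\<forall>i<r. \<forall>j<r. inner (U i) (U j) = (if i = j then 1 else 0)) \<and>
     (\<forall>i<r. \<forall>j<r. inner (V i) (V j) = (if i = j then 1 else 0)) \<and>
     (\<forall>i<r. s i > 0) \<and>
     X = (\<Sum>k<r. s k *\<^sub>R outer (U k) (V k))"

definition opA :: "('m \<Rightarrow> real^'n2^'n1) \<Rightarrow> real^'n2^'n1 \<Rightarrow> real^'m" where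
  "opA As Y = (\<chi> i. inner (As i) Y)"

definition opA_adj :: "('m::finite \<Rightarrow> real^'n2^'n1) \<Rightarrow> real^'m \<Rightarrow> real^'n2^'n1" where
  "opA_adj As p = (\<Sum>i\<in>UNIV. p$i *\<^sub>R As i)"

definition RIP :: "('m::finite \<Rightarrow> real^'n2^'n1) \<Rightarrow> nat \<Rightarrow> real \<Rightarrow> bool" where
  "RIP As s \<delta> \<longleftrightarrow> 0 < \<delta> \<and> \<delta> < 1 \<and>
     (\<forall>Z. rank Z \<le> s \<longrightarrow>
        (1 - \<delta>) * (norm Z)\<^sup>2 \<le> (norm (opA As Z))\<^sup>2 \<and>
        (norm (opA As Z))\<^sup>2 \<le> (1 + \<delta>) * (norm Z)\<^sup>2)"

end

theory Submission
  imports Defs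
begin

lemma subspace_range_mv: "subspace (range (\<lambda>x. (A::real^'n^'m) *v x))"
  by (metis matrix_vector_mul_linear subspace_UNIV linear_subspace_image)

lemma rank_add_le: "rank ((A::real^'n^'m) + B) \<le> rank A + rank B"
proof -
  let ?S = "range (\<lambda>x. A *v x)" and ?T = "range (\<lambda>x. B *v x)"
  have "range (\<lambda>x. (A+B) *v x) \<subseteq> {x + y |x y. x \<in> ?S \<and> y \<in> ?T}"
    by (auto simp: matrix_vector_mult_add_rdistrib)
  hence "dim (range (\<lambda>x. (A+B) *v x)) \<le> dim {x + y |x y. x \<in> ?S \<and> y \<in> ?T}"
    by (rule dim_subset)
  also have "\<dots> \<le> dim ?S + dim ?T"
    using dim_sums_Int[OF subspace_range_mv subspace_range_mv, of A B] by linarith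
  finally show ?thesis by (simp add: rank_dim_range)
qed

lemma rank_scale_le: "rank (c *\<^sub>R (A::real^'n^'m)) \<le> rank A"
proof -
  have e: "(c *\<^sub>R A) *v x = A *v (c *\<^sub>R x)" for x
    by (simp add: vec_eq_iff matrix_vector_mult_def sum_distrib_left mult_ac)
  have "range (\<lambda>x. (c *\<^sub>R A) *v x) \<subseteq> span (range (\<lambda>x. A *v x))"
    unfolding e by (auto intro: span_base)
  thus ?thesis by (simp add: rank_dim_range dim_mono)
qed

lemma rank_outer_le: "rank (outer u v) \<le> 1"
proof -
  have "range (\<lambda>x. outer u v *v x) \<subseteq> span {u}"
  proof
    fix y assume "y \<in> range (\<lambda>x. outer u v *v x)"
    then obtain x where "y = outer u v *v x" by auto
    hence "y = (v \<bullet> x) *\<^sub>R u"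
      by (simp add: outer_def matrix_vector_mult_def vec_eq_iff inner_vec_def sum_distrib_left mult_ac)
    thus "y \<in> span {u}" by (simp add: span_mul span_base)
  qed
  hence "rank (outer u v) \<le> card {u}" unfolding rank_dim_range by (intro dim_le_card) auto
  thus ?thesis by simp
qed

lemma rank_sum_le: "finite K \<Longrightarrow> (\<And>k. k \<in> K \<Longrightarrow> rank (f k :: real^'n^'m) \<le> 1) \<Longrightarrow> rank (sum f K) \<le> card K"
proof (induction K rule: finite_induct)
  case empty thus ?case by simp
next
  case (insert k K)
  have "rank (sum f (insert k K)) \<le> rank (f k) + rank (sum f K)"
    using insert by (simp add: rank_add_le)
  also have "\<dots> \<le> 1 + card K" using insert by (intro add_mono) auto
  finally show ?case using insert by simp
qed

lemma rank_tangent: "M \<in> tangent_space r U V \<Longrightarrow> rank M \<le> 2 * r"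
proof -
  assume "M \<in> tangent_space r U V"
  then obtain P Q where M: "M = (\<Sum>k<r. outer (U k) (Q k)) + (\<Sum>k<r. outer (P k) (V k))"
    unfolding tangent_space_def by auto
  have "rank M \<le> rank (\<Sum>k<r. outer (U k) (Q k)) + rank (\<Sum>k<r. outer (P k) (V k))"
    unfolding M by (rule rank_add_le)
  also have "\<dots> \<le> r + r" by (intro add_mono order_trans[OF rank_sum_le]) (auto simp: rank_outer_le[simplified])
  finally show ?thesis by simp
qed

lemma outer_add2: "outer u (a + b) = outer u a + outer u b"
  by (simp add: outer_def vec_eq_iff algebra_simps)
lemma outer_add1: "outer (a + b) v = outer a v + outer b v"
  by (simp add: outer_def vec_eq_iff algebra_simps)
lemma outer_scale2: "outer u (c *\<^sub>R a) = c *\<^sub>R outer u a"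
  by (simp add: outer_def vec_eq_iff algebra_simps)
lemma outer_scale1: "outer (c *\<^sub>R a) v = c *\<^sub>R outer a v"
  by (simp add: outer_def vec_eq_iff algebra_simps)

lemma tangent_lin:
  assumes "M \<in> tangent_space r U V" "N \<in> tangent_space r U V"
  shows "a *\<^sub>R M + b *\<^sub>R N \<in> tangent_space r U V"
proof -
  obtain P Q where M: "M = (\<Sum>k<r. outer (U k) (Q k)) + (\<Sum>k<r. outer (P k) (V k))"
    using assms(1) unfolding tangent_space_def by auto
  obtain P' Q' where N: "N = (\<Sum>k<r. outer (U k) (Q' k)) + (\<Sum>k<r. outer (P' k) (V k))"
    using assms(2) unfolding tangent_space_def by auto
  have "a *\<^sub>R M + b *\<^sub>R N = (\<Sum>k<r. outer (U k) (a *\<^sub>R Q k + b *\<^sub>R Q' k)) + (\<Sum>k<r. outer (a *\<^sub>R P k + b *\<^sub>R P' k) (V k))"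
    unfolding M N by (simp add: outer_add1 outer_add2 outer_scale1 outer_scale2 sum.distrib scaleR_add_right scaleR_sum_right algebra_simps)
  thus ?thesis unfolding tangent_space_def mem_Collect_eq
    by (intro exI[where x="\<lambda>k. a *\<^sub>R P k + b *\<^sub>R P' k"] exI[where x="\<lambda>k. a *\<^sub>R Q k + b *\<^sub>R Q' k"]) simp
qed

lemma tangent_zero: "0 \<in> tangent_space r U V"
  unfolding tangent_space_def mem_Collect_eq
  by (intro exI[where x="\<lambda>k. 0"] exI[where x="\<lambda>k. 0"]) (simp add: outer_def vec_eq_iff)

definition wt :: "real \<Rightarrow> real^'n2^'n1 \<Rightarrow> 'n1 \<Rightarrow> 'n2 \<Rightarrow> real" where
  "wt eps G i j = (Lmat eps G $i$i) powr (1/4) * (Rmat eps G $j$j) powr (1/4)"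

lemma L_diag: "Lmat eps G $i$i = eps + (norm (row i G))\<^sup>2"
  by (simp add: Lmat_def diag_of_vec_def mat_def matrix_matrix_mult_def transpose_def
      power2_norm_eq_inner inner_vec_def row_def)

lemma R_diag: "Rmat eps G $j$j = eps + (norm (column j G))\<^sup>2"
  by (simp add: Rmat_def diag_of_vec_def mat_def matrix_matrix_mult_def transpose_def
      power2_norm_eq_inner inner_vec_def column_def)

lemma diag_l: "(diag_powr D p ** Z)$i$j = D$i$i powr p * Z$i$j"
proof -
  have "(diag_powr D p ** Z)$i$j = (\<Sum>k\<in>UNIV. if k = i then D$i$i powr p * Z$k$j else 0)"
    unfolding diag_powr_def matrix_matrix_mult_def vec_lambda_beta by (rule sum.cong) auto
  thus ?thesis by simp
qed
lemma diag_r: "(Z ** diag_powr D p)$i$j = Z$i$j * D$j$j powr p"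
proof -
  have "(Z ** diag_powr D p)$i$j = (\<Sum>k\<in>UNIV. if k = j then Z$i$k * D$j$j powr p else 0)"
    unfolding diag_powr_def matrix_matrix_mult_def vec_lambda_beta by (rule sum.cong) auto
  thus ?thesis by simp
qed
lemma diag_mult: "(diag_powr D p ** Z ** diag_powr E q)$i$j = D$i$i powr p * Z$i$j * E$j$j powr q"
  by (simp only: diag_l diag_r)

lemma winner_eq: "winner eps G Z Y = (\<Sum>i\<in>UNIV. \<Sum>j\<in>UNIV. wt eps G i j * Z$i$j * Y$i$j)"
  unfolding winner_def inner_vec_def
  by (intro sum.cong refl) (simp add: diag_mult wt_def)

lemma pm: "(x::real) powr (-1/4) = inverse (x powr (1/4))"
  by (metis minus_divide_left powr_minus)
lemma aux_inv: "inverse (a::real) * z * inverse b = z / (a * b)"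
  by (simp add: divide_inverse mult_ac)

lemma Winv_eq: "Winv eps G Z $i$j = Z$i$j / wt eps G i j"
proof -
  have "Winv eps G Z $i$j = Lmat eps G $i$i powr (-1/4) * Z$i$j * Rmat eps G $j$j powr (-1/4)"
    by (simp only: Winv_def diag_mult)
  also have "\<dots> = Z$i$j / wt eps G i j"
    unfolding pm wt_def by (rule aux_inv)
  finally show ?thesis .
qed

lemma norm_sq_eq: "(norm (Z::real^'n2^'n1))\<^sup>2 = (\<Sum>i\<in>UNIV. \<Sum>j\<in>UNIV. (Z$i$j)\<^sup>2)"
  unfolding power2_norm_eq_inner by (simp add: inner_vec_def power2_eq_square)

lemma powr_quarter: "(x::real) \<ge> 0 \<Longrightarrow> x powr (1/4) = sqrt (sqrt x)"
  by (simp add: sqrt_def root_powr_inverse powr_powr)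

lemma vee_row: "(norm (row i G))\<^sup>2 \<le> (vee_norm G)\<^sup>2"
proof -
  have "norm (row i G) \<le> Max (range (\<lambda>i. norm (row i G)))" by (rule Max_ge) auto
  also have "\<dots> \<le> vee_norm G" by (simp add: vee_norm_def)
  finally show ?thesis by (intro power_mono) auto
qed

lemma vee_col: "(norm (column j G))\<^sup>2 \<le> (vee_norm G)\<^sup>2"
proof -
  have "norm (column j G) \<le> Max (range (\<lambda>j. norm (column j G)))" by (rule Max_ge) auto
  also have "\<dots> \<le> vee_norm G" by (simp add: vee_norm_def)
  finally show ?thesis by (intro power_mono) auto
qed

lemma wt_bounds: assumes "eps > 0"
  shows "sqrt eps \<le> wt eps G i j" "wt eps G i j \<le> sqrt (eps + (vee_norm G)\<^sup>2)"
proof -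
  define a where "a = Lmat eps G $i$i"
  define b where "b = Rmat eps G $j$j"
  define m where "m = eps + (vee_norm G)\<^sup>2"
  have a: "eps \<le> a" "a \<le> m" using vee_row[of i G] by (simp_all add: a_def m_def L_diag)
  have b: "eps \<le> b" "b \<le> m" using vee_col[of j G] by (simp_all add: b_def m_def R_diag)
  have w: "wt eps G i j = sqrt (sqrt a) * sqrt (sqrt b)"
    using a b assms by (simp add: wt_def a_def b_def powr_quarter)
  have "sqrt eps = sqrt (sqrt eps) * sqrt (sqrt eps)"
    using assms by (simp add: real_sqrt_mult[symmetric])
  also have "\<dots> \<le> sqrt (sqrt a) * sqrt (sqrt b)" using a b assms
    by (intro mult_mono) auto
  finally show "sqrt eps \<le> wt eps G i j" using w by simp
  have "sqrt (sqrt a) * sqrt (sqrt b) \<le> sqrt (sqrt m) * sqrt (sqrt m)" using a b assms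
    by (intro mult_mono) auto
  also have "\<dots> = sqrt m" using a assms by (simp add: real_sqrt_mult[symmetric])
  finally show "wt eps G i j \<le> sqrt (eps + (vee_norm G)\<^sup>2)" using w by (simp add: m_def)
qed

definition Sm :: "real \<Rightarrow> real^'n2^'n1 \<Rightarrow> real^'n2^'n1 \<Rightarrow> real^'n2^'n1" where
  "Sm eps G Z = (\<chi> i j. sqrt (wt eps G i j) * Z$i$j)"

lemma wt_nonneg: "wt eps G i j \<ge> 0"
  by (simp add: wt_def)

lemma wt_pos: "eps > 0 \<Longrightarrow> wt eps G i j > 0"
  using wt_bounds(1)[of eps G i j] by (meson less_le_trans real_sqrt_gt_zero)

lemma winner_S: "winner eps G Z Y = inner (Sm eps G Z) (Sm eps G Y)"
proof -
  have h: "wt eps G i j * Z$i$j * Y$i$j = sqrt (wt eps G i j) * Z$i$j * (sqrt (wt eps G i j) * Y$i$j)" for i j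
  proof -
    have "sqrt (wt eps G i j) * sqrt (wt eps G i j) = wt eps G i j" using wt_nonneg[of eps G i j] by simp
    moreover have "sqrt (wt eps G i j) * Z$i$j * (sqrt (wt eps G i j) * Y$i$j) = (sqrt (wt eps G i j) * sqrt (wt eps G i j)) * Z$i$j * Y$i$j"
      by (simp add: algebra_simps)
    ultimately show ?thesis by simp
  qed
  show ?thesis unfolding winner_eq inner_vec_def Sm_def vec_lambda_beta inner_real_def
    by (intro sum.cong refl) (rule h)
qed

lemma Sm_linear: "linear (Sm eps G)"
  by (rule linearI) (simp_all add: Sm_def vec_eq_iff algebra_simps)

lemma Sm_diff: "Sm eps G (A - B) = Sm eps G A - Sm eps G B"
  using Sm_linear linear_diff by blast
lemma Sm_add: "Sm eps G (A + B) = Sm eps G A + Sm eps G B"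
  using Sm_linear linear_add by blast
lemma Sm_scale: "Sm eps G (c *\<^sub>R A) = c *\<^sub>R Sm eps G A"
  using Sm_linear linear_scale by blast

lemma wnorm_S: "wnorm eps G Z = norm (Sm eps G Z)"
  by (simp add: wnorm_def winner_S norm_eq_sqrt_inner)

lemma Sm_zero: assumes "eps > 0" "Sm eps G Z = 0" shows "Z = 0"
proof -
  have "sqrt (wt eps G i j) * Z$i$j = 0" for i j
    using assms(2) unfolding Sm_def vec_eq_iff by simp
  moreover have "sqrt (wt eps G i j) > 0" for i j using wt_pos[OF assms(1)] by simp
  ultimately show ?thesis unfolding vec_eq_iff by (metis mult_eq_0_iff order_less_irrefl zero_index)
qed

lemma Sm_norm_sq: "(norm (Sm eps G M))\<^sup>2 = (\<Sum>i\<in>UNIV. \<Sum>j\<in>UNIV. wt eps G i j * (M$i$j)\<^sup>2)"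
  unfolding norm_sq_eq by (simp add: Sm_def power_mult_distrib wt_nonneg)

lemma frob_lower: assumes "eps > 0"
  shows "sqrt eps * (norm M)\<^sup>2 \<le> (norm (Sm eps G M))\<^sup>2"
  unfolding Sm_norm_sq norm_sq_eq[of M] sum_distrib_left
  by (intro sum_mono mult_right_mono wt_bounds[OF assms]) auto

lemma frob_upper: assumes "eps > 0"
  shows "(norm (Sm eps G M))\<^sup>2 \<le> sqrt (eps + (vee_norm G)\<^sup>2) * (norm M)\<^sup>2"
  unfolding Sm_norm_sq norm_sq_eq[of M] sum_distrib_left
  by (intro sum_mono mult_right_mono wt_bounds[OF assms]) auto

lemma winner_Winv: assumes "eps > 0" shows "winner eps G (Winv eps G M) Y = inner M Y"
proof -
  have "wt eps G i j * (M$i$j / wt eps G i j) * Y$i$j = M$i$j * Y$i$j" for i j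
    using wt_pos[OF assms, of G i j] by simp
  note h = this
  show ?thesis unfolding winner_eq Winv_eq inner_vec_def inner_real_def
    by (intro sum.cong refl) (rule h)
qed

lemma opA_lin: "opA As (a *\<^sub>R Z + b *\<^sub>R Y) = a *\<^sub>R opA As Z + b *\<^sub>R opA As Y"
  by (simp add: opA_def vec_eq_iff inner_add_right)

lemma opA_zero: "opA As 0 = 0"
  by (simp add: opA_def vec_eq_iff)

lemma opA_adj_inner: "inner (opA_adj As p) Y = inner p (opA As Y)"
proof -
  have "inner p (opA As Y) = (\<Sum>i\<in>UNIV. p$i * inner (As i) Y)"
    unfolding inner_vec_def[of p] opA_def by simp
  thus ?thesis unfolding opA_adj_def inner_sum_left inner_scaleR_left by simp
qed

lemma tangent_subspace: "subspace (tangent_space r U V)"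
  unfolding subspace_def
proof (intro conjI ballI allI)
  show "0 \<in> tangent_space r U V" by (rule tangent_zero)
next
  fix x y assume "x \<in> tangent_space r U V" "y \<in> tangent_space r U V"
  thus "x + y \<in> tangent_space r U V" using tangent_lin[of x r U V y 1 1] by simp
next
  fix c x assume "x \<in> tangent_space r U V"
  thus "c *\<^sub>R x \<in> tangent_space r U V" using tangent_lin[OF _ tangent_zero, of x r U V c 0] by simp
qed

lemma wproj_props:
  assumes "eps > 0"
  shows "wproj eps G (tangent_space r U V) Z \<in> tangent_space r U V \<and>
         (\<forall>Y'\<in>tangent_space r U V. winner eps G (Z - wproj eps G (tangent_space r U V) Z) Y' = 0)"
proof -
  let ?T = "tangent_space r U V" and ?S = "Sm eps G"
  have subST: "subspace (?S ` ?T)"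
    by (rule linear_subspace_image[OF Sm_linear tangent_subspace])
  obtain y z where y: "y \<in> span (?S ` ?T)" and z: "\<And>w. w \<in> span (?S ` ?T) \<Longrightarrow> orthogonal z w"
    and e: "?S Z = y + z"
    using orthogonal_subspace_decomp_exists by blast
  have sp: "span (?S ` ?T) = ?S ` ?T" using subST by (simp add: span_eq_iff)
  obtain t where t: "t \<in> ?T" "y = ?S t" using y sp by auto
  have P_t: "t \<in> ?T \<and> (\<forall>Y'\<in>?T. winner eps G (Z - t) Y' = 0)"
  proof (intro conjI ballI)
    show "t \<in> ?T" by (rule t)
    fix Y' assume "Y' \<in> ?T"
    hence "?S Y' \<in> span (?S ` ?T)" by (intro span_base imageI)
    hence "inner z (?S Y') = 0" using z orthogonal_def by blast
    moreover have "?S (Z - t) = z" using e t by (simp add: Sm_diff)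
    ultimately show "winner eps G (Z - t) Y' = 0" by (simp add: winner_S)
  qed
  have uniq: "Y = t" if Y: "Y \<in> ?T \<and> (\<forall>Y'\<in>?T. winner eps G (Z - Y) Y' = 0)" for Y
  proof -
    have D: "Y - t \<in> ?T" using tangent_lin[of Y r U V t 1 "-1"] Y t by simp
    have "winner eps G (Z - t) (Y - t) = 0" using P_t D by blast
    moreover have "winner eps G (Z - Y) (Y - t) = 0" using Y D by blast
    ultimately have "inner (?S (Z - t) - ?S (Z - Y)) (?S (Y - t)) = 0"
      by (simp add: winner_S inner_diff_left)
    moreover have "?S (Z - t) - ?S (Z - Y) = ?S (Y - t)" by (simp add: Sm_diff)
    ultimately have "?S (Y - t) = 0" by simp
    hence "Y - t = 0" using Sm_zero[OF assms] by blast
    thus ?thesis by simp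
  qed
  have "wproj eps G ?T Z = t" unfolding wproj_def
  proof (rule the_equality)
    show "t \<in> ?T \<and> (\<forall>Y'\<in>?T. winner eps G (Z - t) Y' = 0)" by (rule P_t)
  next
    fix Y assume "Y \<in> ?T \<and> (\<forall>Y'\<in>?T. winner eps G (Z - Y) Y' = 0)"
    thus "Y = t" by (rule uniq)
  qed
  thus ?thesis using P_t by simp
qed

lemma pyth_sc: "inner (a::'a::real_inner) b = 0 \<Longrightarrow> (norm (x *\<^sub>R a + y *\<^sub>R b))\<^sup>2 = x\<^sup>2 * (norm a)\<^sup>2 + y\<^sup>2 * (norm b)\<^sup>2"
  unfolding power2_norm_eq_inner by (simp add: inner_add_left inner_add_right inner_commute power2_eq_square algebra_simps)

lemma key_ineq:
  fixes Z Y :: "real^'n2^'n1" and As :: "'m::finite \<Rightarrow> real^'n2^'n1"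
  assumes eps: "eps > 0" and rip: "RIP As k \<delta>"
    and orth: "winner eps G Z Y = 0"
    and rk: "\<And>a b. rank (a *\<^sub>R Z + b *\<^sub>R Y) \<le> k"
  shows "inner (opA As Z) (opA As Y)
    \<le> 1/2 * ((1/sqrt eps - 1/sqrt (eps + (vee_norm G)\<^sup>2)) + (1/sqrt eps + 1/sqrt (eps + (vee_norm G)\<^sup>2)) * \<delta>)
       * wnorm eps G Z * wnorm eps G Y"
proof -
  define \<nu> where "\<nu> = sqrt eps"
  define \<mu> where "\<mu> = sqrt (eps + (vee_norm G)\<^sup>2)"
  define p where "p = norm (Sm eps G Z)"
  define q where "q = norm (Sm eps G Y)"
  define I where "I = inner (opA As Z) (opA As Y)"
  have nu: "\<nu> > 0" using eps by (simp add: \<nu>_def)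
  have mu: "\<mu> > 0" using eps by (simp add: \<mu>_def add_pos_nonneg)
  have d: "0 < \<delta>" "\<delta> < 1" using rip by (auto simp: RIP_def)
  have ripZ: "(1 - \<delta>) * (norm M)\<^sup>2 \<le> (norm (opA As M))\<^sup>2 \<and> (norm (opA As M))\<^sup>2 \<le> (1 + \<delta>) * (norm M)\<^sup>2"
    if "rank M \<le> k" for M using rip that by (auto simp: RIP_def)
  have goal: "I \<le> 1/2 * ((1/\<nu> - 1/\<mu>) + (1/\<nu> + 1/\<mu>) * \<delta>) * p * q"
  proof (cases "p = 0 \<or> q = 0")
    case True
    hence "Z = 0 \<or> Y = 0" using Sm_zero[OF eps] by (auto simp: p_def q_def)
    hence "I = 0" by (auto simp: I_def opA_zero)
    thus ?thesis using True by auto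
  next
    case False
    hence pq: "p > 0" "q > 0" by (auto simp: p_def q_def)
    define U1 where "U1 = q *\<^sub>R Z + p *\<^sub>R Y"
    define U2 where "U2 = q *\<^sub>R Z + (-p) *\<^sub>R Y"
    have o: "inner (Sm eps G Z) (Sm eps G Y) = 0" using orth by (simp add: winner_S)
    have S1: "Sm eps G U1 = q *\<^sub>R Sm eps G Z + p *\<^sub>R Sm eps G Y" by (simp add: U1_def Sm_add Sm_scale)
    have S2: "Sm eps G U2 = q *\<^sub>R Sm eps G Z + (-p) *\<^sub>R Sm eps G Y" by (simp add: U2_def Sm_diff Sm_scale)
    have nS1: "(norm (Sm eps G U1))\<^sup>2 = 2 * (p*q)\<^sup>2"
      unfolding S1 pyth_sc[OF o] by (simp add: p_def q_def power_mult_distrib)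
    have nS2: "(norm (Sm eps G U2))\<^sup>2 = 2 * (p*q)\<^sup>2"
      unfolding S2 pyth_sc[OF o] by (simp add: p_def q_def power_mult_distrib)
    have A1: "opA As U1 = q *\<^sub>R opA As Z + p *\<^sub>R opA As Y" by (simp add: U1_def opA_lin)
    have A2: "opA As U2 = q *\<^sub>R opA As Z + (-p) *\<^sub>R opA As Y" unfolding U2_def by (rule opA_lin)
    have diff: "(norm (opA As U1))\<^sup>2 - (norm (opA As U2))\<^sup>2 = 4 * p * q * I"
      unfolding A1 A2 power2_norm_eq_inner I_def
      by (simp add: inner_add_left inner_add_right inner_commute algebra_simps)
    have r1: "(norm (opA As U1))\<^sup>2 \<le> (1 + \<delta>) * (norm U1)\<^sup>2" using ripZ[OF rk[of q p]] unfolding U1_def by blast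
    have r2: "(1 - \<delta>) * (norm U2)\<^sup>2 \<le> (norm (opA As U2))\<^sup>2" using ripZ[OF rk[of q "-p"]] unfolding U2_def by blast
    have f1: "\<nu> * (norm U1)\<^sup>2 \<le> 2 * (p*q)\<^sup>2" using frob_lower[OF eps, of U1 G] nS1 by (simp add: \<nu>_def)
    have f2: "2 * (p*q)\<^sup>2 \<le> \<mu> * (norm U2)\<^sup>2" using frob_upper[OF eps, of G U2] nS2 by (simp add: \<mu>_def)
    define K where "K = 2 * (p*q)\<^sup>2"
    have e1: "(norm U1)\<^sup>2 \<le> K / \<nu>" using f1 nu by (simp add: K_def le_divide_eq mult.commute)
    have e2: "K / \<mu> \<le> (norm U2)\<^sup>2" using f2 mu by (simp add: K_def divide_le_eq mult.commute)
    have "4 * p * q * I \<le> (1 + \<delta>) * (K / \<nu>) - (1 - \<delta>) * (K / \<mu>)"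
    proof -
      have "(1 + \<delta>) * (norm U1)\<^sup>2 \<le> (1 + \<delta>) * (K / \<nu>)" using e1 d by (intro mult_left_mono) auto
      moreover have "(1 - \<delta>) * (K / \<mu>) \<le> (1 - \<delta>) * (norm U2)\<^sup>2" using e2 d by (intro mult_left_mono) auto
      ultimately show ?thesis using diff r1 r2 by linarith
    qed
    also have "\<dots> = 4 * p * q * (1/2 * ((1/\<nu> - 1/\<mu>) + (1/\<nu> + 1/\<mu>) * \<delta>) * p * q)"
      unfolding K_def using nu mu by (simp add: field_simps power2_eq_square)
    finally have "4 * p * q * I \<le> 4 * p * q * (1/2 * ((1/\<nu> - 1/\<mu>) + (1/\<nu> + 1/\<mu>) * \<delta>) * p * q)" .
    moreover have "0 < 4 * p * q" using pq by simp
    ultimately show ?thesis using mult_le_cancel_left_pos by blast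
  qed
  thus ?thesis by (simp add: \<nu>_def \<mu>_def p_def q_def I_def wnorm_S)
qed

theorem lemma3p9:
  fixes G Xt X :: "real^'n2^'n1"
    and eps \<delta> :: real
    and r :: nat
    and U :: "nat \<Rightarrow> real^'n1" and s :: "nat \<Rightarrow> real" and V :: "nat \<Rightarrow> real^'n2"
    and As :: "'m::finite \<Rightarrow> real^'n2^'n1"
  assumes eps_pos: "eps > 0"
    and rank_Xt: "rank Xt = r"
    and rank_X: "rank X = r"
    and svd: "compact_svd Xt r U s V"
    and rip: "RIP As (3 * r) \<delta>"
  defines "\<nu> \<equiv> sqrt eps"
    and "\<mu> \<equiv> sqrt (eps + (vee_norm G)\<^sup>2)"
    and "P \<equiv> wproj eps G (tangent_space r U V)"
  shows "wnorm eps G (P (Winv eps G (opA_adj As (opA As (X - P X)))))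
           \<le> 1/2 * ((1/\<nu> - 1/\<mu>) + (1/\<nu> + 1/\<mu>) * \<delta>) * wnorm eps G (X - P X)"
proof -
  let ?T = "tangent_space r U V"
  define Z where "Z = X - P X"
  define M where "M = opA_adj As (opA As Z)"
  define Y where "Y = P (Winv eps G M)"
  define c where "c = 1/2 * ((1/\<nu> - 1/\<mu>) + (1/\<nu> + 1/\<mu>) * \<delta>)"
  have PX: "P X \<in> ?T" "\<forall>Y'\<in>?T. winner eps G Z Y' = 0"
    using wproj_props[OF eps_pos, of G r U V X] by (simp_all add: P_def Z_def)
  have PY: "Y \<in> ?T" "\<forall>Y'\<in>?T. winner eps G (Winv eps G M - Y) Y' = 0"
    using wproj_props[OF eps_pos, of G r U V "Winv eps G M"] by (simp_all add: P_def Y_def)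
  have orth: "winner eps G Z Y = 0" using PX PY by blast
  have rk: "rank (a *\<^sub>R Z + b *\<^sub>R Y) \<le> 3 * r" for a b
  proof -
    have e: "a *\<^sub>R Z + b *\<^sub>R Y = a *\<^sub>R X + (b *\<^sub>R Y + (-a) *\<^sub>R P X)"
      by (simp add: Z_def algebra_simps)
    have tT: "b *\<^sub>R Y + (-a) *\<^sub>R P X \<in> ?T" by (rule tangent_lin[OF PY(1) PX(1)])
    have "rank (a *\<^sub>R Z + b *\<^sub>R Y) \<le> rank (a *\<^sub>R X) + rank (b *\<^sub>R Y + (-a) *\<^sub>R P X)"
      unfolding e by (rule rank_add_le)
    also have "\<dots> \<le> r + 2 * r"
      using rank_scale_le[of a X] rank_X rank_tangent[OF tT] by linarith
    finally show ?thesis by simp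
  qed
  have key: "inner (opA As Z) (opA As Y) \<le> c * wnorm eps G Z * wnorm eps G Y"
    using key_ineq[OF eps_pos rip orth rk] by (simp add: c_def \<nu>_def \<mu>_def)
  have "winner eps G (Winv eps G M - Y) Y = 0" using PY by blast
  hence "winner eps G Y Y = winner eps G (Winv eps G M) Y"
    by (simp add: winner_S Sm_diff inner_diff_left)
  also have "\<dots> = inner M Y" by (rule winner_Winv[OF eps_pos])
  also have "\<dots> = inner (opA As Z) (opA As Y)" by (simp add: M_def opA_adj_inner)
  finally have wy: "(wnorm eps G Y)\<^sup>2 \<le> c * wnorm eps G Z * wnorm eps G Y"
    using key by (simp add: wnorm_S winner_S power2_norm_eq_inner)
  have nm: "\<nu> \<le> \<mu>" by (simp add: \<nu>_def \<mu>_def)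
  have nu: "\<nu> > 0" using eps_pos by (simp add: \<nu>_def)
  have "1/\<mu> \<le> 1/\<nu>" using nm nu by (simp add: frac_le)
  moreover have "\<delta> > 0" using rip by (simp add: RIP_def)
  moreover have "1/\<mu> \<ge> 0" using nu nm by simp
  ultimately have "0 \<le> (1/\<nu> + 1/\<mu>) * \<delta>" "1/\<mu> \<le> 1/\<nu>" using nu by simp_all
  hence c0: "c \<ge> 0" unfolding c_def by (intro mult_nonneg_nonneg) linarith+
  have wz0: "wnorm eps G Z \<ge> 0" "wnorm eps G Y \<ge> 0" by (simp_all add: wnorm_S)
  have "wnorm eps G Y \<le> c * wnorm eps G Z"
  proof (cases "wnorm eps G Y = 0")
    case True thus ?thesis using c0 wz0 by simp
  next
    case False
    hence pos: "wnorm eps G Y > 0" using wz0 by simp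
    have "wnorm eps G Y * wnorm eps G Y \<le> (c * wnorm eps G Z) * wnorm eps G Y"
      using wy by (simp add: power2_eq_square)
    thus ?thesis using pos by simp
  qed
  thus ?thesis by (simp add: Y_def M_def Z_def c_def)
qed

end
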